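(* Let $\xi$ be a model and suppose the minimizer $\phi$ of $P_{0,\xi}$ on $\mathcal{C}$ is of the form $\phi(t)=m(1-t)+c$ with $m,c\in(0,\infty)$. Let $\eta(t)=\xi(1)-\int_t^1\int_0^s\phi(\tau)^{-2}d\tau\,ds$ be its formal conjugate. Then: (1) $m,c$ solve the system $$\xi(1)=\frac1m\Big(\frac1m\log\Big(\frac{c+m}{c}\Big)-\frac1{c+m}\Big),\qquad \frac1{\xi'(1)}=c(c+m);$$ (2) $\eta''(1)\ge\xi''(1)$; (3) $\eta''(0)\ge\xi''(0)$.
   Context: A model is $\xi(t)=\sum_{p\ge2}\beta_p^2t^p$, real $\beta_p$ not all zero, with $\xi(1+\epsilon)<\infty$ for some $\epsilon>0$. $\mathcal{C}$ is the set of $\phi\in C([0,1])$ with $\phi\ge0$, non-increasing and concave; $P_{0,\xi}(\phi)=\int_0^1(\xi''\phi+1/\phi)dx$. *)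

theory Defs
  imports "HOL-Analysis.Analysis"
begin

definition xi :: "(nat \<Rightarrow> real) \<Rightarrow> real \<Rightarrow> real" where
  "xi \<beta> t = (\<Sum>p. (if 2 \<le> p then (\<beta> p)\<^sup>2 * t ^ p else 0))"

definition is_model :: "(nat \<Rightarrow> real) \<Rightarrow> bool" where
  "is_model \<beta> \<longleftrightarrow> (\<exists>p\<ge>2. \<beta> p \<noteq> 0) \<and>
     (\<exists>\<epsilon>>0. summable (\<lambda>p. if 2 \<le> p then (\<beta> p)\<^sup>2 * (1 + \<epsilon>) ^ p else 0))"

definition classC :: "(real \<Rightarrow> real) set" where
  "classC = {\<phi>. continuous_on {0..1} \<phi> \<and> (\<forall>x\<in>{0..1}. 0 \<le> \<phi> x) \<and>
     (\<forall>x\<in>{0..1}. \<forall>y\<in>{0..1}. x \<le> y \<longrightarrow> \<phi> y \<le> \<phi> x) \<and> concave_on {0..1} \<phi>}"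

text \<open>The functional P_{0,xi}(phi) = int_0^1 (xi'' phi + 1/phi) dx, valued in [0,infinity]
  (the integrand is nonnegative; 1/0 is read as +infinity).\<close>
definition P0 :: "(nat \<Rightarrow> real) \<Rightarrow> (real \<Rightarrow> real) \<Rightarrow> ennreal" where
  "P0 \<beta> \<phi> = (\<integral>\<^sup>+ x\<in>{0..1}. (ennreal (deriv (deriv (xi \<beta>)) x * \<phi> x)
        + (if \<phi> x = 0 then \<infinity> else ennreal (1 / \<phi> x))) \<partial>lborel)"

definition is_minimizer :: "(nat \<Rightarrow> real) \<Rightarrow> (real \<Rightarrow> real) \<Rightarrow> bool" where
  "is_minimizer \<beta> \<phi> \<longleftrightarrow> \<phi> \<in> classC \<and> (\<forall>\<psi>\<in>classC. P0 \<beta> \<phi> \<le> P0 \<beta> \<psi>)"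

definition conj_eta :: "(nat \<Rightarrow> real) \<Rightarrow> (real \<Rightarrow> real) \<Rightarrow> real \<Rightarrow> real" where
  "conj_eta \<beta> \<phi> t = xi \<beta> 1 - integral {t..1} (\<lambda>s. integral {0..s} (\<lambda>\<tau>. 1 / (\<phi> \<tau>)\<^sup>2))"

end

theory Submission
  imports Defs
begin

definition cf :: "(nat \<Rightarrow> real) \<Rightarrow> nat \<Rightarrow> real" where
  "cf \<beta> n = (if 2 \<le> n then (\<beta> n)\<^sup>2 else 0)"

lemma xi_eq: "xi \<beta> = (\<lambda>t. \<Sum>n. cf \<beta> n * t^n)"
  unfolding xi_def cf_def by (intro ext suminf_cong) auto

lemma model_R:
  assumes "is_model \<beta>"
  shows "\<exists>R>1. \<forall>x::real. \<bar>x\<bar> < R \<longrightarrow> summable (\<lambda>n. cf \<beta> n * x^n)"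
proof -
  obtain e where e: "e > 0" "summable (\<lambda>p. if 2 \<le> p then (\<beta> p)\<^sup>2 * (1 + e) ^ p else 0)"
    using assms unfolding is_model_def by blast
  have s: "summable (\<lambda>n. cf \<beta> n * (1+e)^n)"
  proof -
    have "(\<lambda>n. cf \<beta> n * (1+e)^n) = (\<lambda>p. if 2 \<le> p then (\<beta> p)\<^sup>2 * (1 + e) ^ p else 0)"
      by (auto simp: cf_def fun_eq_iff)
    then show ?thesis using e(2) by simp
  qed
  show ?thesis
  proof (intro exI[of _ "1+e"] conjI allI impI)
    fix x :: real assume "\<bar>x\<bar> < 1 + e"
    then show "summable (\<lambda>n. cf \<beta> n * x^n)"
      using powser_inside[OF s] e by auto
  qed (use e in auto)
qed

lemma ps_summ_diffs:
  fixes a :: "nat \<Rightarrow> real"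
  assumes "\<forall>x. \<bar>x\<bar> < R \<longrightarrow> summable (\<lambda>n. a n * x^n)"
  shows "\<forall>x. \<bar>x\<bar> < R \<longrightarrow> summable (\<lambda>n. diffs a n * x^n)"
  using assms termdiff_converges[of _ R a] by auto

lemma ps_deriv:
  fixes a :: "nat \<Rightarrow> real"
  assumes "\<forall>x. \<bar>x\<bar> < R \<longrightarrow> summable (\<lambda>n. a n * x^n)" "\<bar>x\<bar> < R"
  shows "((\<lambda>x. \<Sum>n. a n * x^n) has_real_derivative (\<Sum>n. diffs a n * x^n)) (at x)"
  using assms termdiffs_strong'[of R a x] by auto

lemma xi_facts:
  assumes "is_model \<beta>"
  obtains R X1 X2 where "R > 1"
    "\<And>x. \<bar>x\<bar> < R \<Longrightarrow> (xi \<beta> has_real_derivative X1 x) (at x)"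
    "\<And>x. \<bar>x\<bar> < R \<Longrightarrow> (X1 has_real_derivative X2 x) (at x)"
    "\<And>x. \<bar>x\<bar> < R \<Longrightarrow> isCont X2 x"
    "\<And>x. \<bar>x\<bar> < R \<Longrightarrow> deriv (xi \<beta>) x = X1 x"
    "\<And>x. \<bar>x\<bar> < R \<Longrightarrow> deriv (deriv (xi \<beta>)) x = X2 x"
    "\<And>x. 0 \<le> x \<Longrightarrow> x < R \<Longrightarrow> X2 x \<ge> 0"
    "X1 0 = 0" "xi \<beta> 0 = 0"
proof -
  obtain R where R: "R > 1" "\<forall>x::real. \<bar>x\<bar> < R \<longrightarrow> summable (\<lambda>n. cf \<beta> n * x^n)"
    using model_R[OF assms] by blast
  define a where "a = cf \<beta>"
  define X1 where "X1 = (\<lambda>x::real. \<Sum>n. diffs a n * x^n)"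
  define X2 where "X2 = (\<lambda>x::real. \<Sum>n. diffs (diffs a) n * x^n)"
  have s0: "\<forall>x. \<bar>x\<bar> < R \<longrightarrow> summable (\<lambda>n. a n * x^n)" using R a_def by simp
  have s1: "\<forall>x. \<bar>x\<bar> < R \<longrightarrow> summable (\<lambda>n. diffs a n * x^n)" by (rule ps_summ_diffs[OF s0])
  have s2: "\<forall>x. \<bar>x\<bar> < R \<longrightarrow> summable (\<lambda>n. diffs (diffs a) n * x^n)" by (rule ps_summ_diffs[OF s1])
  have d0: "(xi \<beta> has_real_derivative X1 x) (at x)" if "\<bar>x\<bar> < R" for x
    using ps_deriv[OF s0 that] unfolding xi_eq X1_def a_def .
  have d1: "(X1 has_real_derivative X2 x) (at x)" if "\<bar>x\<bar> < R" for x
    using ps_deriv[OF s1 that] unfolding X1_def X2_def .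
  have d2: "isCont X2 x" if "\<bar>x\<bar> < R" for x
    using ps_deriv[OF s2 that] unfolding X2_def by (rule DERIV_isCont)
  have e1: "deriv (xi \<beta>) x = X1 x" if "\<bar>x\<bar> < R" for x
    using d0[OF that] by (rule DERIV_imp_deriv)
  have e2: "deriv (deriv (xi \<beta>)) x = X2 x" if "\<bar>x\<bar> < R" for x
  proof -
    have "(deriv (xi \<beta>) has_real_derivative X2 x) (at x)"
      by (rule has_field_derivative_transform_within_open[OF d1[OF that], of "{-R<..<R}"])
         (use that e1 in auto)
    then show ?thesis by (rule DERIV_imp_deriv)
  qed
  have nn: "X2 x \<ge> 0" if "0 \<le> x" "x < R" for x
  proof -
    have "summable (\<lambda>n. diffs (diffs a) n * x^n)" using s2 that by auto
    moreover have "\<And>n. 0 \<le> diffs (diffs a) n * x^n"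
      using that by (auto simp: diffs_def a_def cf_def)
    ultimately show ?thesis unfolding X2_def by (rule suminf_nonneg)
  qed
  have z1: "X1 0 = 0"
    unfolding X1_def using powser_zero[of "diffs a"] by (simp add: diffs_def a_def cf_def)
  have z0: "xi \<beta> 0 = 0"
    unfolding xi_eq using powser_zero[of "cf \<beta>"] by (simp add: cf_def)
  show ?thesis using that[OF R(1) d0 d1 d2 e1 e2 nn z1 z0] by blast
qed


lemma recip_bound:
  fixes u w s c M :: real
  assumes "c > 0" "u \<ge> c" "\<bar>w\<bar> \<le> M" "s \<ge> 0" "s * M \<le> c / 2"
  shows "1 / (u + s*w) \<le> 1/u - s * (w / u\<^sup>2) + s\<^sup>2 * (2 * M\<^sup>2 / c^3)"
proof -
  have sw: "\<bar>s*w\<bar> \<le> c/2" using assms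
    by (metis abs_mult abs_of_nonneg mult_left_mono order_trans)
  have up: "u + s*w \<ge> c/2" using sw assms by linarith
  have u0: "u > 0" using assms by linarith
  have eq: "1 / (u + s*w) = 1/u - s * (w / u\<^sup>2) + (s*w)\<^sup>2 / (u\<^sup>2 * (u + s*w))"
  proof -
    have n1: "u + s*w \<noteq> 0" using up assms(1) by linarith
    have n2: "u \<noteq> 0" using u0 by simp
    have n3: "u\<^sup>2 * (u + s*w) \<noteq> 0" using n1 n2 by simp
    have g: "\<And>D u::real. D \<noteq> 0 \<Longrightarrow> u \<noteq> 0 \<Longrightarrow> 1/D = 1/u - (D-u)/u^2 + (D-u)^2/(u^2*D)"
      by (simp add: field_simps power2_eq_square)
    show ?thesis using g[OF n1 n2] by simp
  qed
  have num: "(s*w)\<^sup>2 \<le> s\<^sup>2 * M\<^sup>2"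
  proof -
    have "\<bar>s*w\<bar> \<le> s*M" using assms by (simp add: abs_mult mult_left_mono)
    then have "(s*w)\<^sup>2 \<le> (s*M)\<^sup>2"
      by (metis abs_ge_zero abs_le_square_iff abs_of_nonneg order_trans power2_abs)
    then show ?thesis by (simp add: power_mult_distrib)
  qed
  have den: "u\<^sup>2 * (u + s*w) \<ge> c\<^sup>2 * (c/2)"
  proof -
    have "u\<^sup>2 \<ge> c\<^sup>2" using assms by (simp add: power_mono)
    then show ?thesis using up assms(1) by (intro mult_mono) auto
  qed
  have "(s*w)\<^sup>2 / (u\<^sup>2 * (u + s*w)) \<le> s\<^sup>2 * M\<^sup>2 / (c\<^sup>2 * (c/2))"
    using num den assms(1) by (intro frac_le) auto
  also have "\<dots> = s\<^sup>2 * (2 * M\<^sup>2 / c^3)"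
    using assms(1) by (simp add: field_simps power2_eq_square power3_eq_cube)
  finally show ?thesis using eq by linarith
qed

lemma variation:
  fixes p f h :: "real \<Rightarrow> real" and c M s0 :: real
  assumes cp: "continuous_on {0..1} p" and cf: "continuous_on {0..1} f"
    and ch: "continuous_on {0..1} h"
    and fpos: "\<forall>t\<in>{0..1}. f t \<ge> c" and c: "c > 0"
    and hb: "\<forall>t\<in>{0..1}. \<bar>h t\<bar> \<le> M" and s0: "s0 > 0"
    and mn: "\<forall>s. 0 < s \<longrightarrow> s < s0 \<longrightarrow>
        integral {0..1} (\<lambda>t. p t * f t + 1 / f t)
          \<le> integral {0..1} (\<lambda>t. p t * (f t + s * h t) + 1 / (f t + s * h t))"
  shows "integral {0..1} (\<lambda>t. h t / (f t)\<^sup>2) \<le> integral {0..1} (\<lambda>t. p t * h t)"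
proof (rule ccontr)
  define A where "A = integral {0..1} (\<lambda>t. p t * h t)"
  define B where "B = integral {0..1} (\<lambda>t. h t / (f t)\<^sup>2)"
  define C0 where "C0 = integral {0..1} (\<lambda>t. p t * f t + 1 / f t)"
  define K where "K = 2 * M\<^sup>2 / c^3"
  assume "\<not> B \<le> A"
  then have BA: "A < B" unfolding A_def B_def by simp
  have M0: "M \<ge> 0" using hb by (metis abs_ge_zero atLeastAtMost_iff order_trans zero_le_one order_refl)
  have K0: "K \<ge> 0" unfolding K_def using c by simp
  have fnz: "\<forall>t\<in>{0..1}. f t \<noteq> 0" using fpos c by force
  have iA: "((\<lambda>t. p t * h t) has_integral A) {0..1}"
    unfolding A_def by (intro integrable_integral integrable_continuous_interval continuous_intros cp ch)
  have iB: "((\<lambda>t. h t / (f t)\<^sup>2) has_integral B) {0..1}"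
    unfolding B_def using fnz
    by (intro integrable_integral integrable_continuous_interval continuous_intros cp ch cf) auto
  have iC: "((\<lambda>t. p t * f t + 1 / f t) has_integral C0) {0..1}"
    unfolding C0_def using fnz
    by (intro integrable_integral integrable_continuous_interval continuous_intros cp ch cf) auto
  define s1 where "s1 = min s0 (c / (2 * (M + 1)))"
  have s1: "s1 > 0" unfolding s1_def using s0 c M0 by auto
  have key: "0 \<le> s * (A - B) + s\<^sup>2 * K" if s: "0 < s" "s < s1" for s
  proof -
    have "s < s0" using s s1_def by auto
    have sM: "s * M \<le> c / 2"
    proof -
      have "s \<le> c / (2 * (M + 1))" using s s1_def by auto
      then have "s * (2 * (M + 1)) \<le> c" using M0 by (simp add: pos_le_divide_eq)
      moreover have "s * M \<le> s * (M + 1)" using s by simp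
      ultimately show ?thesis by (simp add: algebra_simps)
    qed
    have pos: "f t + s * h t \<ge> c / 2" if "t \<in> {0..1}" for t
    proof -
      have "\<bar>s * h t\<bar> \<le> s * M" using hb that s by (simp add: abs_mult mult_left_mono)
      moreover have "f t \<ge> c" using fpos that by auto
      ultimately show ?thesis using sM by (simp add: abs_le_iff)
    qed
    have nz: "\<forall>t\<in>{0..1}. f t + s * h t \<noteq> 0" using pos c by force
    have i1: "(\<lambda>t. p t * (f t + s * h t) + 1 / (f t + s * h t)) integrable_on {0..1}"
      using nz by (intro integrable_continuous_interval continuous_intros cp ch cf) auto
    have i2: "((\<lambda>t. (p t * f t + 1 / f t) + s * (p t * h t) - s * (h t / (f t)\<^sup>2) + s\<^sup>2 * K)
        has_integral (C0 + s * A - s * B + s\<^sup>2 * K)) {0..1}"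
    proof -
      have cst: "((\<lambda>t. s\<^sup>2 * K) has_integral s\<^sup>2 * K) {0..1::real}"
      proof -
        have e: "measure lborel {0..1::real} *\<^sub>R (s\<^sup>2 * K) = s\<^sup>2 * K" by simp
        have "((\<lambda>t::real. s\<^sup>2 * K) has_integral (measure lborel {0..1::real} *\<^sub>R (s\<^sup>2 * K))) {0..1}"
          by (rule has_integral_const_real)
        then show ?thesis unfolding e .
      qed
        have a1: "((\<lambda>t. (p t * f t + 1 / f t) + s * (p t * h t)) has_integral C0 + s * A) {0..1}"
          by (rule has_integral_add[OF iC has_integral_mult_right[OF iA]])
        have a2: "((\<lambda>t. (p t * f t + 1 / f t) + s * (p t * h t) - s * (h t / (f t)\<^sup>2)) has_integral C0 + s * A - s * B) {0..1}"
          by (rule has_integral_diff[OF a1 has_integral_mult_right[OF iB]])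
        show ?thesis by (rule has_integral_add[OF a2 cst])
    qed
    have "integral {0..1} (\<lambda>t. p t * (f t + s * h t) + 1 / (f t + s * h t))
        \<le> integral {0..1} (\<lambda>t. (p t * f t + 1 / f t) + s * (p t * h t) - s * (h t / (f t)\<^sup>2) + s\<^sup>2 * K)"
    proof (rule integral_le[OF i1 has_integral_integrable[OF i2]])
      fix t :: real assume t: "t \<in> {0..1}"
      have "1 / (f t + s * h t) \<le> 1 / f t - s * (h t / (f t)\<^sup>2) + s\<^sup>2 * K"
      proof -
        have "f t \<ge> c" "\<bar>h t\<bar> \<le> M" using fpos hb t by auto
        then show ?thesis unfolding K_def using recip_bound[OF c _ _ _ sM] s by simp
      qed
      then show "p t * (f t + s * h t) + 1 / (f t + s * h t)
          \<le> (p t * f t + 1 / f t) + s * (p t * h t) - s * (h t / (f t)\<^sup>2) + s\<^sup>2 * K"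
        by (simp add: algebra_simps)
    qed
    also have "\<dots> = C0 + s * A - s * B + s\<^sup>2 * K" using i2 by (rule integral_unique)
    finally have "integral {0..1} (\<lambda>t. p t * (f t + s * h t) + 1 / (f t + s * h t))
       \<le> C0 + s * A - s * B + s\<^sup>2 * K" .
    moreover have "C0 \<le> integral {0..1} (\<lambda>t. p t * (f t + s * h t) + 1 / (f t + s * h t))"
      using mn \<open>s < s0\<close> s unfolding C0_def by auto
    ultimately show ?thesis by (simp add: algebra_simps)
  qed
  define s where "s = min (s1/2) ((B - A) / (2 * (K + 1)))"
  have sp: "0 < s" "s < s1" unfolding s_def using s1 BA K0 by auto
  have "0 \<le> s * (A - B) + s\<^sup>2 * K" using key[OF sp] .
  then have "0 \<le> s * ((A - B) + s * K)" by (simp add: power2_eq_square algebra_simps)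
  then have "0 \<le> (A - B) + s * K" using sp(1) by (simp add: zero_le_mult_iff)
  moreover have "s * K < B - A"
  proof -
    have "s \<le> (B - A) / (2 * (K + 1))" unfolding s_def by simp
    then have "s * (2 * (K + 1)) \<le> B - A" using K0 by (simp add: pos_le_divide_eq)
    moreover have "s * K < s * (2 * (K + 1))" using sp K0 by (intro mult_strict_left_mono) auto
    ultimately show ?thesis by linarith
  qed
  ultimately show False by linarith
qed


lemma P0_repr:
  assumes pn: "\<forall>x\<in>{0..1}. 0 \<le> deriv (deriv (xi \<beta>)) x"
    and pc: "continuous_on {0..1} (deriv (deriv (xi \<beta>)))"
    and psc: "continuous_on {0..1} \<psi>" and psp: "\<forall>x\<in>{0..1}. \<psi> x > 0"
  shows "P0 \<beta> \<psi> = ennreal (integral {0..1} (\<lambda>x. deriv (deriv (xi \<beta>)) x * \<psi> x + 1 / \<psi> x))"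
proof -
  define F where "F = (\<lambda>x. deriv (deriv (xi \<beta>)) x * \<psi> x + 1 / \<psi> x)"
  have nz: "\<forall>x\<in>{0..1}. \<psi> x \<noteq> 0" using psp by force
  have cont: "continuous_on {0..1} F" unfolding F_def using nz
    by (intro continuous_intros pc psc) auto
  have int: "(F has_integral integral {0..1} F) {0..1}"
    by (intro integrable_integral integrable_continuous_interval cont)
  have Fn: "0 \<le> F x" if "x \<in> {0..1}" for x
  proof -
    have "0 < \<psi> x" "0 \<le> deriv (deriv (xi \<beta>)) x" using psp pn that by auto
    then show ?thesis unfolding F_def by (intro add_nonneg_nonneg mult_nonneg_nonneg) auto
  qed
  have "P0 \<beta> \<psi> = (\<integral>\<^sup>+ x. ennreal (F x) * indicator {0..1} x \<partial>lborel)"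
    unfolding P0_def
  proof (intro nn_integral_cong)
    fix x :: real
    show "(ennreal (deriv (deriv (xi \<beta>)) x * \<psi> x) + (if \<psi> x = 0 then \<infinity> else ennreal (1 / \<psi> x))) * indicator {0..1} x
        = ennreal (F x) * indicator {0..1} x"
    proof (cases "x \<in> {0..1}")
      case True
      then have a: "\<psi> x > 0" "0 \<le> deriv (deriv (xi \<beta>)) x" using psp pn by auto
      then have b: "0 \<le> deriv (deriv (xi \<beta>)) x * \<psi> x" "0 \<le> 1 / \<psi> x" by auto
      have "ennreal (F x) = ennreal (deriv (deriv (xi \<beta>)) x * \<psi> x) + ennreal (1 / \<psi> x)"
        unfolding F_def by (rule ennreal_plus[OF b])
      then show ?thesis using a(1) True by simp
    next
      case False
      then show ?thesis by simp
    qed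
  qed
  also have "\<dots> = ennreal (integral {0..1} F)"
    by (rule nn_integral_has_integral_lebesgue'[OF Fn int])
  finally show ?thesis unfolding F_def .
qed

lemma test_in_C:
  fixes \<alpha> d g a :: real
  assumes "0 \<le> d" "0 \<le> g" "a \<le> 1" "0 \<le> \<alpha> - d"
  shows "(\<lambda>t. \<alpha> - d * t + g * min (1 - a) (1 - t)) \<in> classC"
  unfolding classC_def
proof (intro CollectI conjI ballI impI)
  show "continuous_on {0..1} (\<lambda>t. \<alpha> - d * t + g * min (1 - a) (1 - t))"
    by (intro continuous_intros)
next
  fix x :: real assume x: "x \<in> {0..1}"
  have "d * x \<le> d" using x assms by (simp add: mult_left_le)
  moreover have "0 \<le> g * min (1 - a) (1 - x)" using x assms by simp
  ultimately show "0 \<le> \<alpha> - d * x + g * min (1 - a) (1 - x)" using assms by linarith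
next
  fix x y :: real assume "x \<in> {0..1}" "y \<in> {0..1}" "x \<le> y"
  then have "d * x \<le> d * y" "g * min (1 - a) (1 - y) \<le> g * min (1 - a) (1 - x)"
    using assms by (auto intro!: mult_left_mono)
  then show "\<alpha> - d * y + g * min (1 - a) (1 - y) \<le> \<alpha> - d * x + g * min (1 - a) (1 - x)"
    by linarith
next
  show "concave_on {0..1} (\<lambda>t. \<alpha> - d * t + g * min (1 - a) (1 - t))"
    unfolding concave_on_iff
  proof (intro conjI ballI allI impI)
    show "convex {0..1::real}" by simp
    fix x y u v :: real assume uv: "0 \<le> u" "0 \<le> v" "u + v = 1"
    have m1: "u * min (1 - a) (1 - x) + v * min (1 - a) (1 - y) \<le> min (1 - a) (1 - (u * x + v * y))"
    proof -
      have "u * min (1 - a) (1 - x) \<le> u * (1 - a)" "v * min (1 - a) (1 - y) \<le> v * (1 - a)"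
           "u * min (1 - a) (1 - x) \<le> u * (1 - x)" "v * min (1 - a) (1 - y) \<le> v * (1 - y)"
        using uv by (auto intro!: mult_left_mono)
      moreover have "u * (1 - a) + v * (1 - a) = 1 - a"
      proof -
        have "u * (1 - a) + v * (1 - a) = (u + v) * (1 - a)" by (simp add: algebra_simps)
        then show ?thesis using uv by simp
      qed
      moreover have "u * (1 - x) + v * (1 - y) = 1 - (u * x + v * y)"
      proof -
        have "u * (1 - x) + v * (1 - y) = (u + v) - (u * x + v * y)" by (simp add: algebra_simps)
        then show ?thesis using uv by simp
      qed
      ultimately show ?thesis by linarith
    qed
    have "g * (u * min (1 - a) (1 - x) + v * min (1 - a) (1 - y)) \<le> g * min (1 - a) (1 - (u * x + v * y))"
      using m1 assms by (intro mult_left_mono) auto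
    moreover have "\<alpha> = u * \<alpha> + v * \<alpha>"
    proof -
      have "u * \<alpha> + v * \<alpha> = (u + v) * \<alpha>" by (simp add: algebra_simps)
      then show ?thesis using uv by simp
    qed
    ultimately show "u * (\<alpha> - d * x + g * min (1 - a) (1 - x)) + v * (\<alpha> - d * y + g * min (1 - a) (1 - y))
        \<le> \<alpha> - d * (u *\<^sub>R x + v *\<^sub>R y) + g * min (1 - a) (1 - (u *\<^sub>R x + v *\<^sub>R y))"
      by (simp add: algebra_simps)
  qed
qed

lemma ftc_real:
  fixes F f :: "real \<Rightarrow> real"
  assumes "a \<le> b" "\<And>x. x \<in> {a..b} \<Longrightarrow> (F has_real_derivative f x) (at x)"
  shows "(f has_integral (F b - F a)) {a..b}"
  using assms
  by (intro fundamental_theorem_of_calculus)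
     (auto simp: has_real_derivative_iff_has_vector_derivative[symmetric] intro: has_field_derivative_at_within)

lemma alg1: fixes m c s :: real
  assumes "m \<noteq> 0" "c \<noteq> 0" "s \<noteq> 0" "s = c + m"
  shows "1/(m*c) - 1/(m* s) = 1/(c* s)"
proof -
  have "1/(m*c) - 1/(m* s) = (s - c)/(m* c * s)" using assms(1-3) by (simp add: field_simps)
  also have "s - c = m" using assms(4) by simp
  finally show ?thesis using assms(1) by simp
qed
lemma alg2: fixes m c s :: real
  assumes "m \<noteq> 0" "c \<noteq> 0" "s \<noteq> 0" "s = c + m"
  shows "c / (m\<^sup>2 * s) - 1 / m\<^sup>2 = - 1 / (m * s)"
proof -
  have "c / (m\<^sup>2 * s) - 1 / m\<^sup>2 = - (s - c) / (m\<^sup>2 * s)" using assms(1-3) by (simp add: field_simps)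
  also have "s - c = m" using assms(4) by simp
  finally show ?thesis using assms(1) by (simp add: power2_eq_square)
qed
lemma alg3: fixes m s L :: real
  assumes "m \<noteq> 0" "s \<noteq> 0"
  shows "L / m\<^sup>2 + - 1 / (m * s) = (1 / m) * ((1 / m) * L - 1 / s)"
  using assms by (simp add: field_simps power2_eq_square)

lemma dphi: "((\<lambda>t. m * (1 - t) + c) has_real_derivative - m) (at x)"
  by (auto intro!: derivative_eq_intros)

lemma int_recip_sq:
  fixes m c :: real assumes "m > 0" "c > 0"
  shows "((\<lambda>t. 1 / (m * (1 - t) + c)\<^sup>2) has_integral 1 / (c * (c + m))) {0..1}"
proof -
  define H where "H = (\<lambda>y::real. 1 / (m * y))"
  have "((\<lambda>t. 1 / (m * (1 - t) + c)\<^sup>2) has_integral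
      ((\<lambda>t. H (m * (1 - t) + c)) 1 - (\<lambda>t. H (m * (1 - t) + c)) 0)) {0..1}"
  proof (rule ftc_real)
    fix x :: real assume x: "x \<in> {0..1}"
    define y where "y = m * (1 - x) + c"
    have pos: "y > 0" unfolding y_def using x assms by (auto intro: add_nonneg_pos)
    have dH: "(H has_real_derivative (- 1 / (m * y\<^sup>2))) (at y)"
      unfolding H_def using pos assms
      by (auto intro!: derivative_eq_intros simp: power2_eq_square)
    have "((\<lambda>t. H (m * (1 - t) + c)) has_real_derivative (- 1 / (m * y\<^sup>2)) * (- m)) (at x)"
      using DERIV_chain2[OF dH[unfolded y_def] dphi[of m c x]] unfolding y_def .
    moreover have "(- 1 / (m * y\<^sup>2)) * (- m) = 1 / y\<^sup>2" using assms by simp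
    ultimately show "((\<lambda>t. H (m * (1 - t) + c)) has_real_derivative 1 / (m * (1 - x) + c)\<^sup>2) (at x)"
      unfolding y_def by simp
  qed simp
  moreover have "(\<lambda>t. H (m * (1 - t) + c)) 1 - (\<lambda>t. H (m * (1 - t) + c)) 0 = 1 / (c * (c + m))"
    unfolding H_def using alg1[of m c "c + m"] assms by (simp add: add.commute)
  ultimately show ?thesis by simp
qed

lemma int_lin_recip_sq:
  fixes m c :: real assumes "m > 0" "c > 0"
  shows "((\<lambda>t. (1 - t) / (m * (1 - t) + c)\<^sup>2) has_integral
           (1 / m) * ((1 / m) * ln ((c + m) / c) - 1 / (c + m))) {0..1}"
proof -
  define H where "H = (\<lambda>y::real. - ln y / m\<^sup>2 - c / (m\<^sup>2 * y))"
  define F where "F = (\<lambda>t. H (m * (1 - t) + c))"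
  have "((\<lambda>t. (1 - t) / (m * (1 - t) + c)\<^sup>2) has_integral (F 1 - F 0)) {0..1}"
  proof (rule ftc_real)
    fix x :: real assume x: "x \<in> {0..1}"
    define y where "y = m * (1 - x) + c"
    have pos: "y > 0" unfolding y_def using x assms by (auto intro: add_nonneg_pos)
    have dH: "(H has_real_derivative (- 1 / (m\<^sup>2 * y) + c / (m\<^sup>2 * y\<^sup>2))) (at y)"
      unfolding H_def using pos assms
      by (auto intro!: derivative_eq_intros simp: power2_eq_square field_simps)
    have "(F has_real_derivative (- 1 / (m\<^sup>2 * y) + c / (m\<^sup>2 * y\<^sup>2)) * (- m)) (at x)"
      using DERIV_chain2[OF dH[unfolded y_def] dphi[of m c x]] unfolding y_def F_def .
    moreover have "(- 1 / (m\<^sup>2 * y) + c / (m\<^sup>2 * y\<^sup>2)) * (- m) = ((y - c) / m) / y\<^sup>2"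
      using assms pos by (simp add: field_simps power2_eq_square)
    moreover have "(y - c) / m = 1 - x" unfolding y_def using assms by simp
    ultimately show "(F has_real_derivative (1 - x) / (m * (1 - x) + c)\<^sup>2) (at x)"
      unfolding y_def by simp
  qed simp
  moreover have "F 1 - F 0 = (1 / m) * ((1 / m) * ln ((c + m) / c) - 1 / (c + m))"
  proof -
    define s where "s = c + m"
    have sp: "s > 0" using assms s_def by simp
    have l: "ln ((c + m) / c) = ln s - ln c" using assms sp s_def by (simp add: ln_div)
    have h1: "F 1 = - ln c / m\<^sup>2 - 1 / m\<^sup>2" unfolding F_def H_def using assms by simp
    have h0: "F 0 = - ln s / m\<^sup>2 - c / (m\<^sup>2 * s)" unfolding F_def H_def s_def by (simp add: add.commute)
    have "F 1 - F 0 = (ln s - ln c) / m\<^sup>2 + (c / (m\<^sup>2 * s) - 1 / m\<^sup>2)"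
      unfolding h1 h0 by (simp add: diff_divide_distrib)
    also have "c / (m\<^sup>2 * s) - 1 / m\<^sup>2 = - 1 / (m * s)"
      using alg2[of m c s] assms sp s_def by simp
    also have "(ln s - ln c) / m\<^sup>2 + - 1 / (m * s) = (1 / m) * ((1 / m) * (ln s - ln c) - 1 / s)"
      using alg3[of m s] assms sp by simp
    finally show ?thesis unfolding l s_def .
  qed
  ultimately show ?thesis by simp
qed

lemma int_k1:
  fixes a :: real assumes "0 \<le> a" "a \<le> 1"
  shows "((\<lambda>t. min 0 (a - t)) has_integral - ((1 - a)\<^sup>2 / 2)) {0..1}"
proof -
  have i1: "((\<lambda>t. min 0 (a - t)) has_integral 0) {0..a}"
  proof -
    have "((\<lambda>t::real. 0::real) has_integral 0) {0..a}" by simp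
    then show ?thesis by (rule has_integral_cong[THEN iffD2, rotated]) auto
  qed
  have i2: "((\<lambda>t. min 0 (a - t)) has_integral - ((1 - a)\<^sup>2 / 2)) {a..1}"
  proof -
    have "((\<lambda>t. a - t) has_integral ((\<lambda>t. a * t - t\<^sup>2 / 2) 1 - (\<lambda>t. a * t - t\<^sup>2 / 2) a)) {a..1}"
      by (rule ftc_real) (use assms in \<open>auto intro!: derivative_eq_intros\<close>)
    moreover have "(\<lambda>t. a * t - t\<^sup>2 / 2) 1 - (\<lambda>t. a * t - t\<^sup>2 / 2) a = - ((1 - a)\<^sup>2 / 2)"
      by (simp add: power2_eq_square field_simps)
    ultimately have "((\<lambda>t. a - t) has_integral - ((1 - a)\<^sup>2 / 2)) {a..1}" by simp
    then show ?thesis by (rule has_integral_cong[THEN iffD2, rotated]) auto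
  qed
  show ?thesis using has_integral_combine[OF assms i1 i2] by simp
qed

lemma int_k0:
  fixes a :: real assumes "0 \<le> a" "a \<le> 1"
  shows "((\<lambda>t. min (t - a) 0) has_integral - (a\<^sup>2 / 2)) {0..1}"
proof -
  have i2: "((\<lambda>t. min (t - a) 0) has_integral 0) {a..1}"
  proof -
    have "((\<lambda>t::real. 0::real) has_integral 0) {a..1}" by simp
    then show ?thesis by (rule has_integral_cong[THEN iffD2, rotated]) auto
  qed
  have i1: "((\<lambda>t. min (t - a) 0) has_integral - (a\<^sup>2 / 2)) {0..a}"
  proof -
    have "((\<lambda>t. t - a) has_integral ((\<lambda>t. t\<^sup>2 / 2 - a * t) a - (\<lambda>t. t\<^sup>2 / 2 - a * t) 0)) {0..a}"
      by (rule ftc_real) (use assms in \<open>auto intro!: derivative_eq_intros\<close>)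
    moreover have "(\<lambda>t. t\<^sup>2 / 2 - a * t) a - (\<lambda>t. t\<^sup>2 / 2 - a * t) 0 = - (a\<^sup>2 / 2)"
      by (simp add: power2_eq_square algebra_simps)
    ultimately have "((\<lambda>t. t - a) has_integral - (a\<^sup>2 / 2)) {0..a}" by simp
    then show ?thesis by (rule has_integral_cong[THEN iffD2, rotated]) auto
  qed
  show ?thesis using has_integral_combine[OF assms i1 i2] by simp
qed
theorem corollary1p23:
  fixes \<beta> :: "nat \<Rightarrow> real" and \<phi> :: "real \<Rightarrow> real" and m c :: real
  assumes "is_model \<beta>"
    and "is_minimizer \<beta> \<phi>"
    and "m > 0" and "c > 0"
    and "\<forall>t\<in>{0..1}. \<phi> t = m * (1 - t) + c"
  shows "(xi \<beta> 1 = (1 / m) * ((1 / m) * ln ((c + m) / c) - 1 / (c + m))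
           \<and> 1 / deriv (xi \<beta>) 1 = c * (c + m))
       \<and> (\<exists>\<eta>1 \<eta>2. (\<forall>x\<in>{0..1}. (conj_eta \<beta> \<phi> has_real_derivative \<eta>1 x) (at x within {0..1}))
           \<and> (\<eta>1 has_real_derivative \<eta>2) (at 1 within {0..1})
           \<and> \<eta>2 \<ge> deriv (deriv (xi \<beta>)) 1)
       \<and> (\<exists>\<eta>1 \<eta>2. (\<forall>x\<in>{0..1}. (conj_eta \<beta> \<phi> has_real_derivative \<eta>1 x) (at x within {0..1}))
           \<and> (\<eta>1 has_real_derivative \<eta>2) (at 0 within {0..1})
           \<and> \<eta>2 \<ge> deriv (deriv (xi \<beta>)) 0)"
proof -
  note mpos = \<open>m > 0\<close> and cpos = \<open>c > 0\<close>
  obtain R X1 X2 where R: "R > 1"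
    and d0: "\<And>x. \<bar>x\<bar> < R \<Longrightarrow> (xi \<beta> has_real_derivative X1 x) (at x)"
    and d1: "\<And>x. \<bar>x\<bar> < R \<Longrightarrow> (X1 has_real_derivative X2 x) (at x)"
    and d2: "\<And>x. \<bar>x\<bar> < R \<Longrightarrow> isCont X2 x"
    and e1: "\<And>x. \<bar>x\<bar> < R \<Longrightarrow> deriv (xi \<beta>) x = X1 x"
    and e2: "\<And>x. \<bar>x\<bar> < R \<Longrightarrow> deriv (deriv (xi \<beta>)) x = X2 x"
    and nn: "\<And>x. 0 \<le> x \<Longrightarrow> x < R \<Longrightarrow> X2 x \<ge> 0"
    and z1: "X1 0 = 0" and z0: "xi \<beta> 0 = 0"
    using xi_facts[OF assms(1)] by blast
  define p where "p = deriv (deriv (xi \<beta>))"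
  define f where "f = (\<lambda>t::real. m * (1 - t) + c)"
  have in01: "\<bar>t\<bar> < R" if "t \<in> {0..1}" for t using R that by auto
  have pX: "p t = X2 t" if "t \<in> {0..1}" for t using e2[OF in01[OF that]] p_def by simp
  have pc: "continuous_on {0..1} p"
  proof -
    have "continuous_on {0..1} X2" using d2 in01 by (intro continuous_at_imp_continuous_on) auto
    then show ?thesis by (rule continuous_on_eq) (use pX in auto)
  qed
  have pn: "\<forall>x\<in>{0..1}. 0 \<le> p x" using nn pX R by auto
  have fc: "continuous_on {0..1} f" unfolding f_def by (intro continuous_intros)
  have fge: "\<forall>t\<in>{0..1}. f t \<ge> c" unfolding f_def using mpos by auto
  have fpos: "\<forall>t\<in>{0..1}. f t > 0" using fge cpos by force
  have phiC: "\<phi> \<in> classC" and minim: "\<forall>\<psi>\<in>classC. P0 \<beta> \<phi> \<le> P0 \<beta> \<psi>"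
    using assms(2) unfolding is_minimizer_def by auto
  have phif: "\<phi> t = f t" if "t \<in> {0..1}" for t using assms(5) that f_def by auto
  have phic: "continuous_on {0..1} \<phi>" using phiC unfolding classC_def by auto
  have P0phi: "P0 \<beta> \<phi> = ennreal (integral {0..1} (\<lambda>x. p x * f x + 1 / f x))"
  proof -
    have "P0 \<beta> \<phi> = ennreal (integral {0..1} (\<lambda>x. p x * \<phi> x + 1 / \<phi> x))"
      using P0_repr[OF pn[unfolded p_def] pc[unfolded p_def] phic] fpos phif unfolding p_def by auto
    also have "integral {0..1} (\<lambda>x. p x * \<phi> x + 1 / \<phi> x) = integral {0..1} (\<lambda>x. p x * f x + 1 / f x)"
      by (rule integral_cong) (simp add: phif)
    finally show ?thesis .
  qed
  have test: "integral {0..1} (\<lambda>t. h t / (f t)\<^sup>2) \<le> integral {0..1} (\<lambda>t. p t * h t)"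
    if hc: "continuous_on {0..1} h" and hb: "\<forall>t\<in>{0..1}. \<bar>h t\<bar> \<le> M" and s0: "s0 > 0"
      and mem: "\<And>s. 0 < s \<Longrightarrow> s < s0 \<Longrightarrow> (\<lambda>t. f t + s * h t) \<in> classC \<and> (\<forall>t\<in>{0..1}. f t + s * h t > 0)"
    for h M s0
  proof (rule variation[OF pc fc hc fge cpos hb s0], intro allI impI)
    fix s :: real assume s: "0 < s" "s < s0"
    have mC: "(\<lambda>t. f t + s * h t) \<in> classC" and pos: "\<forall>t\<in>{0..1}. f t + s * h t > 0"
      using mem[OF s] by auto
    have cont: "continuous_on {0..1} (\<lambda>t. f t + s * h t)" using mC unfolding classC_def by auto
    have "P0 \<beta> \<phi> \<le> P0 \<beta> (\<lambda>t. f t + s * h t)" using minim mC by blast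
    also have "P0 \<beta> (\<lambda>t. f t + s * h t) = ennreal (integral {0..1} (\<lambda>x. p x * (f x + s * h x) + 1 / (f x + s * h x)))"
      using P0_repr[OF pn[unfolded p_def] pc[unfolded p_def] cont pos] unfolding p_def .
    finally have le: "ennreal (integral {0..1} (\<lambda>x. p x * f x + 1 / f x))
        \<le> ennreal (integral {0..1} (\<lambda>x. p x * (f x + s * h x) + 1 / (f x + s * h x)))"
      using P0phi by simp
    have nz: "\<forall>t\<in>{0..1}. f t + s * h t \<noteq> 0" using pos by force
    have "0 \<le> integral {0..1} (\<lambda>x. p x * (f x + s * h x) + 1 / (f x + s * h x))"
    proof (rule integral_nonneg)
      show "(\<lambda>x. p x * (f x + s * h x) + 1 / (f x + s * h x)) integrable_on {0..1}"
        using nz by (intro integrable_continuous_interval continuous_intros pc fc hc) auto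
      fix x :: real assume x: "x \<in> {0..1}"
      have a: "0 \<le> p x" "0 < f x + s * h x" using pn pos x by auto
      then have "0 \<le> p x * (f x + s * h x)" by simp
      moreover have "0 \<le> 1 / (f x + s * h x)" using a by simp
      ultimately show "0 \<le> p x * (f x + s * h x) + 1 / (f x + s * h x)" by simp
    qed
    then show "integral {0..1} (\<lambda>t. p t * f t + 1 / f t)
        \<le> integral {0..1} (\<lambda>t. p t * (f t + s * h t) + 1 / (f t + s * h t))"
      using le ennreal_le_iff by blast
  qed
  have r1: "integral {0..1} (\<lambda>t. 1 / (f t)\<^sup>2) \<le> integral {0..1} p"
  proof -
    have "integral {0..1} (\<lambda>t. (\<lambda>_. 1) t / (f t)\<^sup>2) \<le> integral {0..1} (\<lambda>t. p t * (\<lambda>_. 1) t)"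
    proof (rule test[of _ 1 1])
      fix s :: real assume s: "0 < s" "s < 1"
      have "(\<lambda>t. f t + s * 1) = (\<lambda>t. (m + c + s) - m * t + 0 * min (1 - 0) (1 - t))"
        unfolding f_def by (simp add: fun_eq_iff algebra_simps)
      moreover have "(\<lambda>t. (m + c + s) - m * t + 0 * min (1 - 0) (1 - t)) \<in> classC"
        using mpos cpos s by (intro test_in_C) auto
      ultimately show "(\<lambda>t. f t + s * 1) \<in> classC \<and> (\<forall>t\<in>{0..1}. f t + s * 1 > 0)"
        using fpos s by auto
    qed auto
    then show ?thesis by simp
  qed
  have r2: "integral {0..1} p \<le> integral {0..1} (\<lambda>t. 1 / (f t)\<^sup>2)"
  proof -
    have "integral {0..1} (\<lambda>t. (\<lambda>_. -1) t / (f t)\<^sup>2) \<le> integral {0..1} (\<lambda>t. p t * (\<lambda>_. -1) t)"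
    proof (rule test[of _ 1 c])
      fix s :: real assume s: "0 < s" "s < c"
      have "(\<lambda>t. f t + s * -1) = (\<lambda>t. (m + c - s) - m * t + 0 * min (1 - 0) (1 - t))"
        unfolding f_def by (simp add: fun_eq_iff algebra_simps)
      moreover have "(\<lambda>t. (m + c - s) - m * t + 0 * min (1 - 0) (1 - t)) \<in> classC"
        using mpos cpos s by (intro test_in_C) auto
      moreover have "\<forall>t\<in>{0..1}. f t + s * -1 > 0" using fge s by force
      ultimately show "(\<lambda>t. f t + s * -1) \<in> classC \<and> (\<forall>t\<in>{0..1}. f t + s * -1 > 0)"
        by auto
    qed (use cpos in auto)
    then show ?thesis by simp
  qed
  have r3: "integral {0..1} (\<lambda>t. (1 - t) / (f t)\<^sup>2) \<le> integral {0..1} (\<lambda>t. p t * (1 - t))"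
  proof (rule test[of _ 1 1])
    fix s :: real assume s: "0 < s" "s < 1"
    have "(\<lambda>t. f t + s * (1 - t)) = (\<lambda>t. (m + s + c) - (m + s) * t + 0 * min (1 - 0) (1 - t))"
      unfolding f_def by (simp add: fun_eq_iff algebra_simps)
    moreover have "(\<lambda>t. (m + s + c) - (m + s) * t + 0 * min (1 - 0) (1 - t)) \<in> classC"
      using mpos cpos s by (intro test_in_C) auto
    moreover have "\<forall>t\<in>{0..1}. f t + s * (1 - t) > 0" using fpos s
      by (metis add_pos_nonneg atLeastAtMost_iff diff_ge_0_iff_ge less_eq_real_def mult_nonneg_nonneg)
    ultimately show "(\<lambda>t. f t + s * (1 - t)) \<in> classC \<and> (\<forall>t\<in>{0..1}. f t + s * (1 - t) > 0)"
      by auto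
  qed (auto intro!: continuous_intros)
  have r4: "integral {0..1} (\<lambda>t. p t * (1 - t)) \<le> integral {0..1} (\<lambda>t. (1 - t) / (f t)\<^sup>2)"
  proof -
    have "integral {0..1} (\<lambda>t. (\<lambda>t. - (1 - t)) t / (f t)\<^sup>2) \<le> integral {0..1} (\<lambda>t. p t * (\<lambda>t. - (1 - t)) t)"
    proof (rule test[of _ 1 m])
      fix s :: real assume s: "0 < s" "s < m"
      have "(\<lambda>t. f t + s * - (1 - t)) = (\<lambda>t. (m - s + c) - (m - s) * t + 0 * min (1 - 0) (1 - t))"
        unfolding f_def by (simp add: fun_eq_iff algebra_simps)
      moreover have "(\<lambda>t. (m - s + c) - (m - s) * t + 0 * min (1 - 0) (1 - t)) \<in> classC"
        using mpos cpos s by (intro test_in_C) auto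
      moreover have "\<forall>t\<in>{0..1}. f t + s * - (1 - t) > 0"
      proof
        fix t :: real assume t: "t \<in> {0..1}"
        have "0 \<le> (m - s) * (1 - t)" using s t by auto
        then show "f t + s * - (1 - t) > 0" unfolding f_def using cpos by (simp add: algebra_simps)
      qed
      ultimately show "(\<lambda>t. f t + s * - (1 - t)) \<in> classC \<and> (\<forall>t\<in>{0..1}. f t + s * - (1 - t) > 0)"
        by auto
    qed (use mpos in \<open>auto intro!: continuous_intros\<close>)
    then have "integral {0..1} (\<lambda>t. - ((1 - t) / (f t)\<^sup>2)) \<le> integral {0..1} (\<lambda>t. - (p t * (1 - t)))"
      by (simp only: minus_divide_left mult_minus_right)
    then show ?thesis unfolding integral_neg by linarith
  qed
  have r5: "integral {0..1} (\<lambda>t. min (1 - a) (1 - t) / (f t)\<^sup>2) \<le> integral {0..1} (\<lambda>t. p t * min (1 - a) (1 - t))"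
    if a: "0 \<le> a" "a \<le> 1" for a
  proof (rule test[of _ 1 1])
    fix s :: real assume s: "0 < s" "s < 1"
    have "(\<lambda>t. f t + s * min (1 - a) (1 - t)) = (\<lambda>t. (m + c) - m * t + s * min (1 - a) (1 - t))"
      unfolding f_def by (simp add: fun_eq_iff algebra_simps)
    moreover have "(\<lambda>t. (m + c) - m * t + s * min (1 - a) (1 - t)) \<in> classC"
      using mpos cpos s a by (intro test_in_C) auto
    moreover have "\<forall>t\<in>{0..1}. f t + s * min (1 - a) (1 - t) > 0"
    proof
      fix t :: real assume t: "t \<in> {0..1}"
      have "0 \<le> s * min (1 - a) (1 - t)" using s t a by auto
      then show "f t + s * min (1 - a) (1 - t) > 0" using fpos t by (meson add_pos_nonneg)
    qed
    ultimately show "(\<lambda>t. f t + s * min (1 - a) (1 - t)) \<in> classC \<and> (\<forall>t\<in>{0..1}. f t + s * min (1 - a) (1 - t) > 0)"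
      by auto
  qed (use a in \<open>auto intro!: continuous_intros\<close>)
  have If2: "integral {0..1} (\<lambda>t. 1 / (f t)\<^sup>2) = 1 / (c * (c + m))"
    unfolding f_def using int_recip_sq[OF mpos cpos] by (rule integral_unique)
  have If2l: "integral {0..1} (\<lambda>t. (1 - t) / (f t)\<^sup>2) = (1 / m) * ((1 / m) * ln ((c + m) / c) - 1 / (c + m))"
    unfolding f_def using int_lin_recip_sq[OF mpos cpos] by (rule integral_unique)
  have Ip: "integral {0..1} p = X1 1"
  proof -
    have "(X2 has_integral (X1 1 - X1 0)) {0..1}"
    proof (rule ftc_real)
      fix x :: real assume "x \<in> {0..1}"
      then show "(X1 has_real_derivative X2 x) (at x)" by (rule d1[OF in01])
    qed simp
    then have "(p has_integral (X1 1 - X1 0)) {0..1}"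
      by (rule has_integral_cong[THEN iffD2, rotated]) (simp add: pX)
    then show ?thesis using z1 by (simp add: integral_unique)
  qed
  have Ipl: "integral {0..1} (\<lambda>t. p t * (1 - t)) = xi \<beta> 1"
  proof -
    define F where "F = (\<lambda>t. X1 t * (1 - t) + xi \<beta> t)"
    have "((\<lambda>t. X2 t * (1 - t)) has_integral (F 1 - F 0)) {0..1}"
    proof (rule ftc_real)
      fix x :: real assume x: "x \<in> {0..1}"
      have dl: "((\<lambda>t. 1 - t) has_real_derivative -1) (at x)" by (auto intro!: derivative_eq_intros)
      have "(F has_real_derivative (X2 x * (1 - x) + -1 * X1 x + X1 x)) (at x)"
        unfolding F_def by (rule DERIV_add[OF DERIV_mult[OF d1[OF in01[OF x]] dl] d0[OF in01[OF x]]])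
      then show "(F has_real_derivative X2 x * (1 - x)) (at x)" by simp
    qed simp
    then have "((\<lambda>t. p t * (1 - t)) has_integral (F 1 - F 0)) {0..1}"
      by (rule has_integral_cong[THEN iffD2, rotated]) (simp add: pX)
    moreover have "F 1 - F 0 = xi \<beta> 1" unfolding F_def using z1 z0 by simp
    ultimately show ?thesis by (simp add: integral_unique)
  qed
  have X11: "X1 1 = 1 / (c * (c + m))" using r1 r2 Ip If2 by linarith
  have part1: "xi \<beta> 1 = (1 / m) * ((1 / m) * ln ((c + m) / c) - 1 / (c + m))
           \<and> 1 / deriv (xi \<beta>) 1 = c * (c + m)"
  proof
    show "xi \<beta> 1 = (1 / m) * ((1 / m) * ln ((c + m) / c) - 1 / (c + m))"
      using r3 r4 Ipl If2l by linarith
    have "deriv (xi \<beta>) 1 = X1 1" using e1 R by auto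
    then show "1 / deriv (xi \<beta>) 1 = c * (c + m)" using X11 by simp
  qed
  define G where "G = (\<lambda>t. p t - 1 / (f t)\<^sup>2)"
  have fnz: "\<forall>t\<in>{0..1}. f t \<noteq> 0" using fpos by force
  have Gc: "continuous_on {0..1} G" unfolding G_def using fnz
    by (intro continuous_intros pc fc) auto
  have intb: "(\<lambda>t. G t * w t) integrable_on {0..1}" if "continuous_on {0..1} w" for w
    using Gc that by (intro integrable_continuous_interval continuous_intros)
  have IG: "integral {0..1} G = 0"
  proof -
    have "integral {0..1} G = integral {0..1} p - integral {0..1} (\<lambda>t. 1 / (f t)\<^sup>2)"
      unfolding G_def using fnz
      by (intro integral_diff integrable_continuous_interval continuous_intros pc fc) auto
    then show ?thesis using r1 r2 by linarith
  qed
  have IGl: "integral {0..1} (\<lambda>t. G t * (1 - t)) = 0"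
  proof -
    have "integral {0..1} (\<lambda>t. G t * (1 - t)) = integral {0..1} (\<lambda>t. p t * (1 - t) - (1 - t) / (f t)\<^sup>2)"
      unfolding G_def by (rule integral_cong) (simp add: algebra_simps)
    also have "\<dots> = integral {0..1} (\<lambda>t. p t * (1 - t)) - integral {0..1} (\<lambda>t. (1 - t) / (f t)\<^sup>2)"
      using fnz by (intro integral_diff integrable_continuous_interval continuous_intros pc fc) auto
    finally show ?thesis using r3 r4 by linarith
  qed
  have IGa: "0 \<le> integral {0..1} (\<lambda>t. G t * min (1 - a) (1 - t))" if a: "0 \<le> a" "a \<le> 1" for a
  proof -
    have "integral {0..1} (\<lambda>t. G t * min (1 - a) (1 - t))
        = integral {0..1} (\<lambda>t. p t * min (1 - a) (1 - t) - min (1 - a) (1 - t) / (f t)\<^sup>2)"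
      unfolding G_def by (rule integral_cong) (simp add: algebra_simps)
    also have "\<dots> = integral {0..1} (\<lambda>t. p t * min (1 - a) (1 - t)) - integral {0..1} (\<lambda>t. min (1 - a) (1 - t) / (f t)\<^sup>2)"
      using fnz by (intro integral_diff integrable_continuous_interval continuous_intros pc fc) auto
    finally show ?thesis using r5[OF a] by linarith
  qed
  have f1: "f 1 = c" and f0: "f 0 = c + m" unfolding f_def by auto
  have bd1: "p 1 \<le> 1 / c\<^sup>2"
  proof (rule ccontr)
    assume "\<not> p 1 \<le> 1 / c\<^sup>2"
    then have G1: "G 1 > 0" unfolding G_def f1 by simp
    define \<delta> where "\<delta> = G 1 / 2"
    have \<delta>: "\<delta> > 0" using G1 \<delta>_def by simp
    obtain d where d: "d > 0" "\<forall>t\<in>{0..1}. dist t 1 < d \<longrightarrow> dist (G t) (G 1) < \<delta>"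
      using Gc \<delta> unfolding continuous_on_iff by (metis atLeastAtMost_iff order_refl zero_le_one)
    define a where "a = max (1/2) (1 - d/2)"
    have a: "0 \<le> a" "a \<le> 1" "a < 1" unfolding a_def using d by auto
    have Gbig: "G t \<ge> \<delta>" if "t \<in> {0..1}" "a \<le> t" for t
    proof -
      have "dist t 1 < d" using that a_def d by (auto simp: dist_real_def)
      then have "dist (G t) (G 1) < \<delta>" using d that by auto
      then have "\<bar>G t - G 1\<bar> < \<delta>" by (simp add: dist_real_def)
      then have "G 1 - G t < \<delta>" by (simp add: abs_less_iff)
      then show ?thesis unfolding \<delta>_def by linarith
    qed
    define k where "k = (\<lambda>t::real. min 0 (a - t))"
    have kc: "continuous_on {0..1} k" unfolding k_def by (intro continuous_intros)
    have "integral {0..1} (\<lambda>t. G t * min (1 - a) (1 - t)) = integral {0..1} (\<lambda>t. (1 - a) * G t + G t * k t)"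
      unfolding k_def by (rule integral_cong) (auto simp: min_def algebra_simps)
    also have "\<dots> = (1 - a) * integral {0..1} G + integral {0..1} (\<lambda>t. G t * k t)"
    proof -
      have "integral {0..1} (\<lambda>t. (1 - a) * G t + G t * k t) = integral {0..1} (\<lambda>t. (1 - a) * G t) + integral {0..1} (\<lambda>t. G t * k t)"
        by (intro integral_add integrable_continuous_interval continuous_intros Gc kc)
      then show ?thesis by simp
    qed
    also have "\<dots> = integral {0..1} (\<lambda>t. G t * k t)" using IG by simp
    also have "\<dots> \<le> integral {0..1} (\<lambda>t. \<delta> * k t)"
    proof (rule integral_le)
      show "(\<lambda>t. G t * k t) integrable_on {0..1}" by (rule intb[OF kc])
      show "(\<lambda>t. \<delta> * k t) integrable_on {0..1}"
        by (intro integrable_continuous_interval continuous_intros kc)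
      fix t :: real assume t: "t \<in> {0..1}"
      show "G t * k t \<le> \<delta> * k t"
      proof (cases "a \<le> t")
        case True
        then have "k t \<le> 0" unfolding k_def by auto
        then show ?thesis using Gbig[OF t True] by (simp add: mult_right_mono_neg)
      next
        case False
        then show ?thesis unfolding k_def by auto
      qed
    qed
    also have "\<dots> = \<delta> * (- ((1 - a)\<^sup>2 / 2))"
      using integral_unique[OF int_k1[OF a(1,2)]] unfolding k_def by simp
    also have "\<dots> < 0" using \<delta> a by (simp add: mult_pos_neg)
    finally show False using IGa[OF a(1,2)] by linarith
  qed
  have bd0: "p 0 \<le> 1 / (c + m)\<^sup>2"
  proof (rule ccontr)
    assume "\<not> p 0 \<le> 1 / (c + m)\<^sup>2"
    then have G0: "G 0 > 0" unfolding G_def f0 by simp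
    define \<delta> where "\<delta> = G 0 / 2"
    have \<delta>: "\<delta> > 0" using G0 \<delta>_def by simp
    obtain d where d: "d > 0" "\<forall>t\<in>{0..1}. dist t 0 < d \<longrightarrow> dist (G t) (G 0) < \<delta>"
      using Gc \<delta> unfolding continuous_on_iff by (metis atLeastAtMost_iff order_refl zero_le_one)
    define a where "a = min (1/2) (d/2)"
    have a: "0 \<le> a" "a \<le> 1" "0 < a" unfolding a_def using d by auto
    have Gbig: "G t \<ge> \<delta>" if "t \<in> {0..1}" "t \<le> a" for t
    proof -
      have "dist t 0 < d" using that a_def d by (auto simp: dist_real_def)
      then have "dist (G t) (G 0) < \<delta>" using d that by auto
      then have "\<bar>G t - G 0\<bar> < \<delta>" by (simp add: dist_real_def)
      then have "G 0 - G t < \<delta>" by (simp add: abs_less_iff)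
      then show ?thesis unfolding \<delta>_def by linarith
    qed
    define k where "k = (\<lambda>t::real. min (t - a) 0)"
    have kc: "continuous_on {0..1} k" unfolding k_def by (intro continuous_intros)
    have "integral {0..1} (\<lambda>t. G t * min (1 - a) (1 - t)) = integral {0..1} (\<lambda>t. G t * (1 - t) + G t * k t)"
      unfolding k_def by (rule integral_cong) (auto simp: min_def algebra_simps)
    also have "\<dots> = integral {0..1} (\<lambda>t. G t * (1 - t)) + integral {0..1} (\<lambda>t. G t * k t)"
      by (intro integral_add integrable_continuous_interval continuous_intros Gc kc)
    also have "\<dots> = integral {0..1} (\<lambda>t. G t * k t)" using IGl by simp
    also have "\<dots> \<le> integral {0..1} (\<lambda>t. \<delta> * k t)"
    proof (rule integral_le)
      show "(\<lambda>t. G t * k t) integrable_on {0..1}" by (rule intb[OF kc])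
      show "(\<lambda>t. \<delta> * k t) integrable_on {0..1}"
        by (intro integrable_continuous_interval continuous_intros kc)
      fix t :: real assume t: "t \<in> {0..1}"
      show "G t * k t \<le> \<delta> * k t"
      proof (cases "t \<le> a")
        case True
        then have "k t \<le> 0" unfolding k_def by auto
        then show ?thesis using Gbig[OF t True] by (simp add: mult_right_mono_neg)
      next
        case False
        then show ?thesis unfolding k_def by auto
      qed
    qed
    also have "\<dots> = \<delta> * (- (a\<^sup>2 / 2))"
      using integral_unique[OF int_k0[OF a(1,2)]] unfolding k_def by simp
    also have "\<dots> < 0" using \<delta> a by (simp add: mult_pos_neg)
    finally show False using IGa[OF a(1,2)] by linarith
  qed
  define q where "q = (\<lambda>\<tau>. 1 / (\<phi> \<tau>)\<^sup>2)"
  have phinz: "\<forall>t\<in>{0..1}. \<phi> t \<noteq> 0" using phif fnz by auto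
  have qc: "continuous_on {0..1} q" unfolding q_def using phinz
    by (intro continuous_intros phic) auto
  define J where "J = (\<lambda>s. integral {0..s} q)"
  have dJv: "(J has_vector_derivative q x) (at x within {0..1})" if "x \<in> {0..1}" for x
    unfolding J_def by (rule integral_has_vector_derivative[OF qc that])
  have dJ: "(J has_real_derivative q x) (at x within {0..1})" if "x \<in> {0..1}" for x
    using dJv[OF that] by (simp add: has_real_derivative_iff_has_vector_derivative)
  have Jc: "continuous_on {0..1} J" using dJv by (rule continuous_on_vector_derivative)
  have Jint: "J integrable_on {0..1}" by (rule integrable_continuous_interval[OF Jc])
  have deta: "(conj_eta \<beta> \<phi> has_real_derivative J x) (at x within {0..1})" if x: "x \<in> {0..1}" for x
  proof -
    define K where "K = (\<lambda>u. xi \<beta> 1 - integral {0..1} J + integral {0..u} J)"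
    have "(K has_vector_derivative J x) (at x within {0..1})"
    proof -
      have "((\<lambda>u. integral {0..u} J) has_vector_derivative J x) (at x within {0..1})"
        by (rule integral_has_vector_derivative[OF Jc x])
      then have "((\<lambda>u. integral {0..u} J) has_real_derivative J x) (at x within {0..1})"
        by (simp add: has_real_derivative_iff_has_vector_derivative)
      then have "(K has_real_derivative 0 + J x) (at x within {0..1})"
        unfolding K_def by (intro DERIV_add DERIV_const)
      then show ?thesis by (simp add: has_real_derivative_iff_has_vector_derivative)
    qed
    then have dK: "(K has_real_derivative J x) (at x within {0..1})"
      by (simp add: has_real_derivative_iff_has_vector_derivative)
    show ?thesis
    proof (rule has_field_derivative_transform_within[OF dK zero_less_one x])
      fix y :: real assume y: "y \<in> {0..1}" "dist y x < 1"
      have "integral {0..y} J + integral {y..1} J = integral {0..1} J"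
        using y by (intro Henstock_Kurzweil_Integration.integral_combine[OF _ _ Jint]) auto
      then show "K y = conj_eta \<beta> \<phi> y"
        unfolding K_def conj_eta_def J_def q_def by (simp add: algebra_simps)
    qed
  qed
  have q1: "q 1 = 1 / c\<^sup>2" unfolding q_def using phif[of 1] f1 by simp
  have q0: "q 0 = 1 / (c + m)\<^sup>2" unfolding q_def using phif[of 0] f0 by simp
  have part2: "\<exists>\<eta>1 \<eta>2. (\<forall>x\<in>{0..1}. (conj_eta \<beta> \<phi> has_real_derivative \<eta>1 x) (at x within {0..1}))
           \<and> (\<eta>1 has_real_derivative \<eta>2) (at 1 within {0..1})
           \<and> \<eta>2 \<ge> deriv (deriv (xi \<beta>)) 1"
  proof (intro exI conjI)
    show "\<forall>x\<in>{0..1}. (conj_eta \<beta> \<phi> has_real_derivative J x) (at x within {0..1})" using deta by blast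
    show "(J has_real_derivative q 1) (at 1 within {0..1})" by (rule dJ) simp
    show "deriv (deriv (xi \<beta>)) 1 \<le> q 1" using q1 bd1 unfolding p_def by simp
  qed
  have part3: "\<exists>\<eta>1 \<eta>2. (\<forall>x\<in>{0..1}. (conj_eta \<beta> \<phi> has_real_derivative \<eta>1 x) (at x within {0..1}))
           \<and> (\<eta>1 has_real_derivative \<eta>2) (at 0 within {0..1})
           \<and> \<eta>2 \<ge> deriv (deriv (xi \<beta>)) 0"
  proof (intro exI conjI)
    show "\<forall>x\<in>{0..1}. (conj_eta \<beta> \<phi> has_real_derivative J x) (at x within {0..1})" using deta by blast
    show "(J has_real_derivative q 0) (at 0 within {0..1})" by (rule dJ) simp
    show "deriv (deriv (xi \<beta>)) 0 \<le> q 0" using q0 bd0 unfolding p_def by simp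
  qed
  show ?thesis using part1 part2 part3 by blast
qed

end
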